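(* Let $X$ be a real Hilbert space, $I=\{1,\dots,m\}$, and let $(T_i)_{i\in I}$ be averaged nonexpansive operators $X\to X$ with fixed point sets $Z_i=\operatorname{Fix}T_i$. Suppose each $T_i$ is boundedly regular, $Z=\bigcap_{i\in I}Z_i\neq\varnothing$, and the family $(Z_i)_{i\in I}$ is boundedly regular. Then for every $x_0\in X$ the sequence $((T_m\cdots T_1)^nx_0)_{n\in\mathbb N}$ converges strongly (in norm) to some point of $Z$.
   Context: $T$ is averaged nonexpansive if $T=(1-\lambda)\mathrm{Id}+\lambda N$ with $\lambda\in[0,1[$ and $N$ nonexpansive. An operator $T$ with $\operatorname{Fix}T\ne\varnothing$ is boundedly regular if for every bounded sequence $(x_n)$ with $x_n-Tx_n\to0$ we have $d_{\operatorname{Fix}T}(x_n)\to0$. A finite family $(C_i)_{i\in I}$ of closed convex sets with $C=\bigcap_iC_i\ne\varnothing$ is boundedly regular if for every bounded sequence $(x_n)$, $\max_{i}d_{C_i}(x_n)\to0$ implies $d_C(x_n)\to0$. *)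

theory Defs
  imports "HOL-Analysis.Analysis"
begin

definition nonexpansive :: "('a::real_normed_vector \<Rightarrow> 'a) \<Rightarrow> bool" where
  "nonexpansive N \<longleftrightarrow> (\<forall>x y. norm (N x - N y) \<le> norm (x - y))"

definition averaged :: "('a::real_normed_vector \<Rightarrow> 'a) \<Rightarrow> bool" where
  "averaged T \<longleftrightarrow> (\<exists>l N. 0 \<le> l \<and> l < 1 \<and> nonexpansive N \<and>
                      (\<forall>x. T x = (1 - l) *\<^sub>R x + l *\<^sub>R N x))"

definition Fix :: "('a \<Rightarrow> 'a) \<Rightarrow> 'a set" where
  "Fix T = {x. T x = x}"

definition boundedly_regular_op :: "('a::real_normed_vector \<Rightarrow> 'a) \<Rightarrow> bool" where
  "boundedly_regular_op T \<longleftrightarrow> Fix T \<noteq> {} \<and>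
     (\<forall>x :: nat \<Rightarrow> 'a. bounded (range x) \<longrightarrow> (\<lambda>n. x n - T (x n)) \<longlonglongrightarrow> 0 \<longrightarrow>
        (\<lambda>n. infdist (x n) (Fix T)) \<longlonglongrightarrow> 0)"

definition boundedly_regular_family ::
    "'i set \<Rightarrow> ('i \<Rightarrow> 'a::real_normed_vector set) \<Rightarrow> bool" where
  "boundedly_regular_family I C \<longleftrightarrow> (\<Inter>i\<in>I. C i) \<noteq> {} \<and>
     (\<forall>x :: nat \<Rightarrow> 'a. bounded (range x) \<longrightarrow>
        (\<lambda>n. Max ((\<lambda>i. infdist (x n) (C i)) ` I)) \<longlonglongrightarrow> 0 \<longrightarrow>
        (\<lambda>n. infdist (x n) (\<Inter>i\<in>I. C i)) \<longlonglongrightarrow> 0)"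

definition comp_ops :: "(nat \<Rightarrow> 'a \<Rightarrow> 'a) \<Rightarrow> nat \<Rightarrow> 'a \<Rightarrow> 'a" where
  "comp_ops T m = fold (\<lambda>i S. T i \<circ> S) [1..<Suc m] id"

end

theory Submission
  imports Defs
begin

lemma averaged_ineq:
  fixes T :: "'a::real_inner \<Rightarrow> 'a"
  assumes "averaged T"
  shows "\<exists>c>0. \<forall>x z. z \<in> Fix T \<longrightarrow>
           (norm (T x - z))\<^sup>2 + c * (norm (x - T x))\<^sup>2 \<le> (norm (x - z))\<^sup>2"
proof -
  obtain l N where l: "0 \<le> l" "l < 1" and N: "nonexpansive N"
    and TN: "\<And>x. T x = (1 - l) *\<^sub>R x + l *\<^sub>R N x"
    using assms unfolding averaged_def by blast
  show ?thesis
  proof (intro exI[of _ "1 - l"] conjI allI impI)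
    show "0 < 1 - l" using l by simp
    fix x z assume z: "z \<in> Fix T"
    show "(norm (T x - z))\<^sup>2 + (1 - l) * (norm (x - T x))\<^sup>2 \<le> (norm (x - z))\<^sup>2"
    proof (cases "l = 0")
      case True
      then show ?thesis using TN by simp
    next
      case False
      then have lp: "0 < l" using l by simp
      have "T z = z" using z by (simp add: Fix_def)
      then have "l *\<^sub>R (N z - z) = 0" using TN[of z] by (simp add: algebra_simps)
      then have Nz: "N z = z" using lp by simp
      define a where "a = x - z"
      define b where "b = N x - z"
      have nb: "norm b \<le> norm a" using N Nz unfolding nonexpansive_def a_def b_def by metis
      have e1: "T x - z = (1 - l) *\<^sub>R a + l *\<^sub>R b"
        unfolding a_def b_def TN by (simp add: algebra_simps)
      have e2: "x - T x = l *\<^sub>R (a - b)"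
        unfolding a_def b_def TN by (simp add: algebra_simps)
      define A where "A = a \<bullet> a"
      define B where "B = b \<bullet> b"
      define C where "C = a \<bullet> b"
      have AB: "B \<le> A" using nb unfolding A_def B_def
        by (metis norm_eq_sqrt_inner norm_ge_zero real_sqrt_le_iff inner_ge_zero)
      have D: "0 \<le> A + B - 2 * C"
      proof -
        have "0 \<le> (a - b) \<bullet> (a - b)" by simp
        thus ?thesis unfolding A_def B_def C_def by (simp add: inner_diff_left inner_diff_right inner_commute)
      qed
      have L1: "(norm (T x - z))\<^sup>2 = (1-l)^2 * A + 2 * l * (1 - l) * C + l^2 * B"
        unfolding e1 power2_norm_eq_inner A_def B_def C_def
        by (simp add: inner_add_left inner_add_right inner_commute power2_eq_square algebra_simps)
      have L2: "(norm (x - T x))\<^sup>2 = l^2 * (A + B - 2 * C)"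
        unfolding e2 power2_norm_eq_inner A_def B_def C_def
        by (simp add: inner_diff_left inner_diff_right inner_commute power2_eq_square algebra_simps)
      have R: "(norm (x - z))\<^sup>2 = A"
        unfolding a_def[symmetric] power2_norm_eq_inner A_def by simp
      have key: "A - ((1-l)^2 * A + 2 * l * (1 - l) * C + l^2 * B + (1 - l) * (l^2 * (A + B - 2 * C)))
                 = l * (A - B) + l * (1 - l)^2 * (A + B - 2 * C)"
        by (simp add: power2_eq_square algebra_simps)
      have "0 \<le> l * (A - B) + l * (1 - l)^2 * (A + B - 2 * C)"
        using lp AB D by (intro add_nonneg_nonneg mult_nonneg_nonneg) auto
      then show ?thesis unfolding L1 L2 R using key by linarith
    qed
  qed
qed


lemma averaged_closed_Fix:
  fixes T :: "'a::real_inner \<Rightarrow> 'a"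
  assumes "averaged T"
  shows "closed (Fix T)"
proof -
  obtain l N where l: "0 \<le> l" "l < 1" and N: "nonexpansive N"
    and TN: "\<And>x. T x = (1 - l) *\<^sub>R x + l *\<^sub>R N x"
    using assms unfolding averaged_def by blast
  have ne: "dist (T x) (T y) \<le> dist x y" for x y
  proof -
    have "T x - T y = (1 - l) *\<^sub>R (x - y) + l *\<^sub>R (N x - N y)"
      unfolding TN by (simp add: algebra_simps)
    then have "norm (T x - T y) \<le> (1 - l) * norm (x - y) + l * norm (N x - N y)"
      using l by (metis abs_of_nonneg diff_ge_0_iff_ge less_imp_le norm_scaleR norm_triangle_ineq)
    also have "\<dots> \<le> (1 - l) * norm (x - y) + l * norm (x - y)"
      using N l unfolding nonexpansive_def by (simp add: mult_left_mono)
    finally show ?thesis by (simp add: dist_norm algebra_simps)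
  qed
  have "continuous_on UNIV T"
    unfolding continuous_on_iff using ne by (metis le_less_trans)
  moreover have "Fix T = {x \<in> UNIV. T x = id x}" by (simp add: Fix_def)
  ultimately show ?thesis
    by (metis closed_Collect_eq closed_UNIV continuous_on_id id_apply Fix_def)
qed

fun chain :: "(nat \<Rightarrow> 'a \<Rightarrow> 'a) \<Rightarrow> nat \<Rightarrow> 'a \<Rightarrow> 'a" where
  "chain T 0 = id"
| "chain T (Suc k) = T (Suc k) \<circ> chain T k"

lemma comp_ops_chain: "comp_ops T m = chain T m"
proof (induction m)
  case 0
  then show ?case by (simp add: comp_ops_def)
next
  case (Suc m)
  have "[1..<Suc (Suc m)] = [1..<Suc m] @ [Suc m]" by simp
  then show ?case using Suc by (simp add: comp_ops_def)
qed

lemma chain_ineq: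
  fixes T :: "nat \<Rightarrow> 'a::real_inner \<Rightarrow> 'a"
  assumes H: "\<forall>i\<in>{1..m}. \<forall>x z. z \<in> Fix (T i) \<longrightarrow>
      (norm (T i x - z))\<^sup>2 + c * (norm (x - T i x))\<^sup>2 \<le> (norm (x - z))\<^sup>2"
    and z: "z \<in> (\<Inter>i\<in>{1..m}. Fix (T i))"
  shows "k \<le> m \<Longrightarrow> (norm (chain T k x - z))\<^sup>2
     + c * (\<Sum>i<k. (norm (chain T i x - chain T (Suc i) x))\<^sup>2) \<le> (norm (x - z))\<^sup>2"
proof (induction k)
  case 0
  then show ?case by simp
next
  case (Suc k)
  have "Suc k \<in> {1..m}" using Suc.prems by simp
  then have "(norm (T (Suc k) (chain T k x) - z))\<^sup>2
     + c * (norm (chain T k x - T (Suc k) (chain T k x)))\<^sup>2 \<le> (norm (chain T k x - z))\<^sup>2"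
    using H z by blast
  then show ?case using Suc by (simp add: distrib_left)
qed

lemma fejer_conv:
  fixes x :: "nat \<Rightarrow> 'a::{real_normed_vector, complete_space}"
  assumes Z: "closed Z" "Z \<noteq> {}"
    and F: "\<And>z n k. z \<in> Z \<Longrightarrow> n \<le> k \<Longrightarrow> dist (x k) z \<le> dist (x n) z"
    and D: "(\<lambda>n. infdist (x n) Z) \<longlonglongrightarrow> 0"
  shows "\<exists>z\<in>Z. x \<longlonglongrightarrow> z"
proof -
  have "Cauchy x"
  proof (rule metric_CauchyI)
    fix e :: real assume e: "0 < e"
    obtain N where N: "infdist (x N) Z < e / 2"
      using D e by (metis (no_types, lifting) LIMSEQ_D diff_zero half_gt_zero infdist_nonneg abs_of_nonneg le_refl real_norm_def)
    then have "(INF a\<in>Z. dist (x N) a) < e / 2" using Z(2) by (simp add: infdist_notempty)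
    then have "\<exists>z\<in>Z. dist (x N) z < e / 2"
      by (rule cINF_less_iff[OF Z(2) bdd_below_image_dist, THEN iffD1])
    then obtain z where zZ: "z \<in> Z" and dz: "dist (x N) z < e / 2" by blast
    show "\<exists>M. \<forall>m\<ge>M. \<forall>n\<ge>M. dist (x m) (x n) < e"
    proof (intro exI allI impI)
      fix p q assume "N \<le> p" "N \<le> q"
      then have "dist (x p) z < e / 2" "dist (x q) z < e / 2"
        using F[OF zZ] dz by (meson le_less_trans)+
      moreover have "dist (x p) (x q) \<le> dist (x p) z + dist (x q) z" by (rule dist_triangle2)
      ultimately show "dist (x p) (x q) < e" by linarith
    qed
  qed
  then obtain L where L: "x \<longlonglongrightarrow> L" using Cauchy_convergent_iff convergent_def by blast
  then have "(\<lambda>n. infdist (x n) Z) \<longlonglongrightarrow> infdist L Z" by (rule tendsto_infdist)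
  then have "infdist L Z = 0" using D LIMSEQ_unique by blast
  then have "L \<in> Z" using Z in_closed_iff_infdist_zero by blast
  then show ?thesis using L by blast
qed

lemma max_tendsto0:
  fixes f :: "'i \<Rightarrow> nat \<Rightarrow> real"
  assumes "finite I" "I \<noteq> {}" "\<And>i. i \<in> I \<Longrightarrow> f i \<longlonglongrightarrow> 0"
    and nn: "\<And>i n. i \<in> I \<Longrightarrow> 0 \<le> f i n"
  shows "(\<lambda>n. Max ((\<lambda>i. f i n) ` I)) \<longlonglongrightarrow> 0"
proof (rule tendsto_sandwich[of "\<lambda>n. 0" _ _ "\<lambda>n. \<Sum>i\<in>I. f i n"])
  show "\<forall>\<^sub>F n in sequentially. 0 \<le> Max ((\<lambda>i. f i n) ` I)"
  proof (intro always_eventually allI)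
    fix n
    obtain i where "i \<in> I" using assms(2) by blast
    then show "0 \<le> Max ((\<lambda>i. f i n) ` I)"
      using nn[of i n] assms(1) by (meson Max_ge finite_imageI image_eqI order_trans)
  qed
  show "\<forall>\<^sub>F n in sequentially. Max ((\<lambda>i. f i n) ` I) \<le> (\<Sum>i\<in>I. f i n)"
  proof (intro always_eventually allI)
    fix n
    have "\<forall>y\<in>(\<lambda>i. f i n) ` I. y \<le> (\<Sum>i\<in>I. f i n)"
      using assms(1) nn by (auto intro!: member_le_sum)
    then show "Max ((\<lambda>i. f i n) ` I) \<le> (\<Sum>i\<in>I. f i n)"
      using assms(1,2) by simp
  qed
  show "(\<lambda>n. 0) \<longlonglongrightarrow> (0::real)" by simp
  show "(\<lambda>n. \<Sum>i\<in>I. f i n) \<longlonglongrightarrow> 0" using assms(3) by (intro tendsto_null_sum) auto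
qed


lemma sq_tendsto0:
  fixes f :: "nat \<Rightarrow> real"
  assumes "(\<lambda>n. (f n)\<^sup>2) \<longlonglongrightarrow> 0" "\<And>n. 0 \<le> f n"
  shows "f \<longlonglongrightarrow> 0"
proof -
  have "(\<lambda>n. sqrt ((f n)\<^sup>2)) \<longlonglongrightarrow> sqrt 0" using assms(1) by (rule tendsto_real_sqrt)
  then show ?thesis using assms(2) by simp
qed

theorem theorem7p1:
  fixes T :: "nat \<Rightarrow> 'a::{real_inner, complete_space} \<Rightarrow> 'a" and m :: nat
  assumes "m \<ge> 1"
    and "\<And>i. i \<in> {1..m} \<Longrightarrow> averaged (T i)"
    and "\<And>i. i \<in> {1..m} \<Longrightarrow> boundedly_regular_op (T i)"
    and "(\<Inter>i\<in>{1..m}. Fix (T i)) \<noteq> {}"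
    and "boundedly_regular_family {1..m} (\<lambda>i. Fix (T i))"
  shows "\<forall>x0. \<exists>z \<in> (\<Inter>i\<in>{1..m}. Fix (T i)).
           (\<lambda>n. (comp_ops T m ^^ n) x0) \<longlonglongrightarrow> z"
proof
  fix x0
  define Z where "Z = (\<Inter>i\<in>{1..m}. Fix (T i))"
  have Zne: "Z \<noteq> {}" using assms(4) Z_def by simp
  have Zcl: "closed Z" unfolding Z_def using assms(2) averaged_closed_Fix by blast
  have "\<forall>i\<in>{1..m}. \<exists>c>0. \<forall>x z. z \<in> Fix (T i) \<longrightarrow>
           (norm (T i x - z))\<^sup>2 + c * (norm (x - T i x))\<^sup>2 \<le> (norm (x - z))\<^sup>2"
    using assms(2) averaged_ineq by blast
  then obtain cc where cc: "\<forall>i\<in>{1..m}. cc i > 0 \<and> (\<forall>x z. z \<in> Fix (T i) \<longrightarrow>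
           (norm (T i x - z))\<^sup>2 + cc i * (norm (x - T i x))\<^sup>2 \<le> (norm (x - z))\<^sup>2)"
    by (metis (no_types, lifting) bchoice)
  define c where "c = Min (cc ` {1..m})"
  have "c \<in> cc ` {1..m}" unfolding c_def using assms(1) by (intro Min_in) auto
  then have cpos: "c > 0" using cc by auto
  have cle: "c \<le> cc i" if "i \<in> {1..m}" for i unfolding c_def using that by simp
  have H: "\<forall>i\<in>{1..m}. \<forall>x z. z \<in> Fix (T i) \<longrightarrow>
           (norm (T i x - z))\<^sup>2 + c * (norm (x - T i x))\<^sup>2 \<le> (norm (x - z))\<^sup>2"
  proof (intro ballI allI impI)
    fix i x z assume i: "i \<in> {1..m}" and z: "z \<in> Fix (T i)"
    have "c * (norm (x - T i x))\<^sup>2 \<le> cc i * (norm (x - T i x))\<^sup>2"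
      using cle[OF i] by (simp add: mult_right_mono)
    moreover have "(norm (T i x - z))\<^sup>2 + cc i * (norm (x - T i x))\<^sup>2 \<le> (norm (x - z))\<^sup>2"
      using cc i z by blast
    ultimately show "(norm (T i x - z))\<^sup>2 + c * (norm (x - T i x))\<^sup>2 \<le> (norm (x - z))\<^sup>2"
      by linarith
  qed
  define S where "S = chain T m"
  have cS: "comp_ops T m = S" unfolding S_def by (rule comp_ops_chain)
  define x where "x n = (S ^^ n) x0" for n
  have xS: "x (Suc n) = S (x n)" for n unfolding x_def by simp
  define g where "g i n = norm (chain T i (x n) - chain T (Suc i) (x n))" for i n
  define e where "e n = (\<Sum>i<m. (g i n)\<^sup>2)" for n
  have e_nn: "0 \<le> e n" for n unfolding e_def by (simp add: sum_nonneg)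
  have CI: "(norm (chain T k y - z))\<^sup>2 + c * (\<Sum>i<k. (norm (chain T i y - chain T (Suc i) y))\<^sup>2)
      \<le> (norm (y - z))\<^sup>2" if "z \<in> Z" "k \<le> m" for z k y
    using chain_ineq[OF H, of z k y] that Z_def by blast
  have step: "(norm (x (Suc n) - z))\<^sup>2 + c * e n \<le> (norm (x n - z))\<^sup>2" if "z \<in> Z" for z n
    using CI[OF that order_refl, of "x n"] unfolding xS S_def e_def g_def by simp
  have chain_le: "norm (chain T k y - z) \<le> norm (y - z)" if "z \<in> Z" "k \<le> m" for z k y
  proof -
    have "0 \<le> c * (\<Sum>i<k. (norm (chain T i y - chain T (Suc i) y))\<^sup>2)"
      using cpos by (simp add: sum_nonneg)
    then have "(norm (chain T k y - z))\<^sup>2 \<le> (norm (y - z))\<^sup>2" using CI[OF that, of y] by linarith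
    then show ?thesis by (rule power2_le_imp_le) simp
  qed
  have fej1: "norm (x (Suc n) - z) \<le> norm (x n - z)" if "z \<in> Z" for z n
    using chain_le[OF that order_refl, of "x n"] unfolding xS S_def .
  have fej: "norm (x k - z) \<le> norm (x n - z)" if "z \<in> Z" "n \<le> k" for z n k
  proof -
    have "decseq (\<lambda>n. norm (x n - z))" using fej1[OF that(1)] by (rule decseq_SucI)
    then show ?thesis using that(2) by (simp add: decseq_def)
  qed
  obtain z0 where z0: "z0 \<in> Z" using Zne by blast
  define d where "d n = (norm (x n - z0))\<^sup>2" for n
  have "decseq d" unfolding d_def
    by (rule decseq_SucI) (simp add: fej1[OF z0] power_mono)
  moreover have "\<forall>i. 0 \<le> d i" by (simp add: d_def)
  ultimately obtain L where dL: "d \<longlonglongrightarrow> L" by (rule decseq_convergent)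
  have dd: "(\<lambda>n. d n - d (Suc n)) \<longlonglongrightarrow> 0"
  proof -
    have "(\<lambda>n. d n - d (Suc n)) \<longlonglongrightarrow> L - L"
      using dL LIMSEQ_Suc[OF dL] by (rule tendsto_diff)
    then show ?thesis by simp
  qed
  have e0: "e \<longlonglongrightarrow> 0"
  proof (rule tendsto_sandwich[of "\<lambda>n. 0" _ _ "\<lambda>n. (d n - d (Suc n)) / c"])
    show "\<forall>\<^sub>F n in sequentially. 0 \<le> e n" using e_nn by simp
    show "\<forall>\<^sub>F n in sequentially. e n \<le> (d n - d (Suc n)) / c"
    proof (intro always_eventually allI)
      fix n
      have "c * e n \<le> d n - d (Suc n)" using step[OF z0, of n] unfolding d_def by linarith
      then show "e n \<le> (d n - d (Suc n)) / c" using cpos by (simp add: field_simps)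
    qed
    show "(\<lambda>n. 0) \<longlonglongrightarrow> (0::real)" by simp
    show "(\<lambda>n. (d n - d (Suc n)) / c) \<longlonglongrightarrow> 0" using tendsto_divide[OF dd tendsto_const[of c]] cpos by simp
  qed
  have g0: "g i \<longlonglongrightarrow> 0" if "i < m" for i
  proof (rule sq_tendsto0)
    show "\<And>n. 0 \<le> g i n" unfolding g_def by simp
    show "(\<lambda>n. (g i n)\<^sup>2) \<longlonglongrightarrow> 0"
    proof (rule tendsto_sandwich[of "\<lambda>n. 0" _ _ e])
      show "\<forall>\<^sub>F n in sequentially. 0 \<le> (g i n)\<^sup>2" by simp
      show "\<forall>\<^sub>F n in sequentially. (g i n)\<^sup>2 \<le> e n"
        unfolding e_def using that by (intro always_eventually allI member_le_sum) auto
    qed (use e0 in auto)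
  qed
  have tri: "norm (x n - chain T k (x n)) \<le> (\<Sum>i<k. g i n)" for k n
  proof (induction k)
    case 0
    then show ?case by simp
  next
    case (Suc k)
    have "norm (x n - chain T (Suc k) (x n)) \<le> norm (x n - chain T k (x n)) + g k n"
      unfolding g_def by (rule norm_diff_triangle_ineq[THEN order_trans[rotated]]) simp
    then show ?case using Suc by simp
  qed
  have xc0: "(\<lambda>n. norm (x n - chain T k (x n))) \<longlonglongrightarrow> 0" if "k \<le> m" for k
  proof (rule tendsto_sandwich[of "\<lambda>n. 0" _ _ "\<lambda>n. \<Sum>i<k. g i n"])
    show "(\<lambda>n. \<Sum>i<k. g i n) \<longlonglongrightarrow> 0"
      using that g0 by (intro tendsto_null_sum) auto
  qed (use tri in auto)
  have bnd: "bounded (range (\<lambda>n. chain T k (x n)))" if "k \<le> m" for k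
  proof -
    have "chain T k (x n) \<in> cball z0 (norm (x0 - z0))" for n
    proof -
      have "norm (chain T k (x n) - z0) \<le> norm (x n - z0)" by (rule chain_le[OF z0 that])
      also have "\<dots> \<le> norm (x 0 - z0)" by (rule fej[OF z0]) simp
      finally show ?thesis by (simp add: x_def dist_norm norm_minus_commute)
    qed
    then show ?thesis by (meson bounded_cball bounded_subset image_subset_iff rangeE)
  qed
  have di0: "(\<lambda>n. infdist (x n) (Fix (T i))) \<longlonglongrightarrow> 0" if i: "i \<in> {1..m}" for i
  proof -
    define y where "y n = chain T (i - 1) (x n)" for n
    have si: "Suc (i - 1) = i" using i by simp
    have im: "i - 1 \<le> m" "i - 1 < m" using i by auto
    have Ty: "T i (y n) = chain T i (x n)" for n
      unfolding y_def using chain.simps(2)[of T "i - 1"] si by (metis comp_apply)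
    have "(\<lambda>n. norm (y n - T i (y n))) = g (i - 1)"
      unfolding Ty by (rule ext) (simp only: g_def y_def si)
    then have "(\<lambda>n. norm (y n - T i (y n))) \<longlonglongrightarrow> 0"
      using g0[of "i - 1"] i by (metis Suc_le_eq atLeastAtMost_iff si)
    then have "(\<lambda>n. y n - T i (y n)) \<longlonglongrightarrow> 0" by (simp add: tendsto_norm_zero_iff)
    moreover have "bounded (range y)" unfolding y_def using bnd[OF im(1)] .
    ultimately have yd: "(\<lambda>n. infdist (y n) (Fix (T i))) \<longlonglongrightarrow> 0"
      using assms(3)[OF i] unfolding boundedly_regular_op_def by blast
    have xy: "(\<lambda>n. dist (x n) (y n)) \<longlonglongrightarrow> 0"
      using xc0[OF im(1)] unfolding y_def by (simp add: dist_norm)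
    show ?thesis
    proof (rule tendsto_sandwich[of "\<lambda>n. 0" _ _ "\<lambda>n. infdist (y n) (Fix (T i)) + dist (x n) (y n)"])
      show "(\<lambda>n. infdist (y n) (Fix (T i)) + dist (x n) (y n)) \<longlonglongrightarrow> 0"
        using tendsto_add[OF yd xy] by simp
    qed (auto simp: infdist_nonneg infdist_triangle)
  qed
  have "(\<lambda>n. Max ((\<lambda>i. infdist (x n) (Fix (T i))) ` {1..m})) \<longlonglongrightarrow> 0"
    using max_tendsto0[of "{1..m}" "\<lambda>i n. infdist (x n) (Fix (T i))"] di0 assms(1)
    by (simp add: infdist_nonneg)
  moreover have "bounded (range x)" using bnd[of 0] by simp
  ultimately have "(\<lambda>n. infdist (x n) Z) \<longlonglongrightarrow> 0"
    using assms(5) unfolding boundedly_regular_family_def Z_def by blast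
  then have "\<exists>z\<in>Z. x \<longlonglongrightarrow> z"
    using fejer_conv[OF Zcl Zne, of x] fej by (simp add: dist_norm)
  then show "\<exists>z \<in> (\<Inter>i\<in>{1..m}. Fix (T i)). (\<lambda>n. (comp_ops T m ^^ n) x0) \<longlonglongrightarrow> z"
    unfolding cS Z_def x_def by simp
qed

end
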